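(* For any test point $(\mathbf{x}_{te},y_{te})$ with $\mathbf{x}_{te}\in\mathbb{R}^d$, $\|\mathbf{x}_{te}\|_2=1$, and any $\mathbf{x}_i\in\mathcal{X}$, $$\mathcal{I}_{ntk}(\mathbf{x}_i,\mathbf{x}_{te})=\alpha(\mathbf{x}_i,\mathbf{x}_{te})(f_{ntk}(\mathbf{x}_{te})-y_{te})(f^{\backslash i}_{ntk}(\mathbf{x}_i)-y_i)+\tfrac12\alpha(\mathbf{x}_i,\mathbf{x}_{te})^2(f^{\backslash i}_{ntk}(\mathbf{x}_i)-y_i)^2.$$
   Context: Training points $\mathcal{X}=\{\mathbf{x}_i\}_{i=1}^n\subset\mathbb{R}^d$ with $\|\mathbf{x}_i\|_2=1$, labels $\mathcal{Y}=(y_1,\dots,y_n)^\top$, $\lambda>0$. The NTK is $K^\infty(\mathbf{x},\mathbf{x}')=\frac{\mathbf{x}^\top\mathbf{x}'(\pi-\arccos(\mathbf{x}^\top\mathbf{x}'))}{2\pi}$; $\mathbf{K}^\infty_{tr}=[K^\infty(\mathbf{x}_i,\mathbf{x}_j)]_{i,j}$; for a point $\mathbf{x}$, $\mathbf{K}^\infty(\mathbf{x})=[K^\infty(\mathbf{x},\mathbf{x}_j)]_{j}\in\mathbb{R}^n$ (with $\mathbf{K}^\infty_{te}=\mathbf{K}^\infty(\mathbf{x}_{te})$). The NTK ridge predictor is $f_{ntk}(\mathbf{x})=\mathbf{K}^\infty(\mathbf{x})^\top(\mathbf{K}^\infty_{tr}+\lambda\mathbf{I}_n)^{-1}\mathcal{Y}$.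 Let $\mathbf{k}_{-i}$ and $k_{-ii}$ be the $i$-th column and $(i,i)$ entry of $(\mathbf{K}^\infty_{tr}+\lambda\mathbf{I}_n)^{-1}$; the leave-one-out predictor (kernel ridge regression with the $i$-th training point removed) is $f^{\backslash i}_{ntk}(\mathbf{x})=\mathbf{K}^\infty(\mathbf{x})^\top\left((\mathbf{K}^\infty_{tr}+\lambda\mathbf{I}_n)^{-1}-\frac{\mathbf{k}_{-i}\mathbf{k}_{-i}^\top}{k_{-ii}}\right)\mathcal{Y}$. Define $\mathcal{I}_{ntk}(\mathbf{x}_i,\mathbf{x}_{te})=\frac12(f^{\backslash i}_{ntk}(\mathbf{x}_{te})-y_{te})^2-\frac12(f_{ntk}(\mathbf{x}_{te})-y_{te})^2$ and $\alpha(\mathbf{x}_i,\mathbf{x}_{te})=(\mathbf{K}^\infty_{te})^\top(\mathbf{K}^\infty_{tr}+\lambda\mathbf{I}_n)^{-1}\mathbf{e}_i$. *)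

theory Defs
  imports "HOL-Analysis.Analysis"
begin

definition ntk :: "real^'d \<Rightarrow> real^'d \<Rightarrow> real" where
  "ntk x x' = (x \<bullet> x') * (pi - arccos (x \<bullet> x')) / (2 * pi)"

definition Ktr :: "('n::finite \<Rightarrow> real^'d) \<Rightarrow> real^'n^'n" where
  "Ktr X = (\<chi> i j. ntk (X i) (X j))"

definition Kvec :: "('n::finite \<Rightarrow> real^'d) \<Rightarrow> real^'d \<Rightarrow> real^'n" where
  "Kvec X x = (\<chi> j. ntk x (X j))"

definition Ainv :: "('n::finite \<Rightarrow> real^'d) \<Rightarrow> real \<Rightarrow> real^'n^'n" where
  "Ainv X lam = matrix_inv (Ktr X + lam *\<^sub>R mat 1)"

definition f_ntk :: "('n::finite \<Rightarrow> real^'d) \<Rightarrow> real^'n \<Rightarrow> real \<Rightarrow> real^'d \<Rightarrow> real" where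
  "f_ntk X Y lam x = Kvec X x \<bullet> (Ainv X lam *v Y)"

text \<open>Leave-one-out predictor, by the rank-one downdate formula of the paper:
  k_{-i} is the i-th column, k_{-ii} the (i,i) entry of (K_tr + lambda I)^{-1}.\<close>
definition f_loo :: "('n::finite \<Rightarrow> real^'d) \<Rightarrow> real^'n \<Rightarrow> real \<Rightarrow> 'n \<Rightarrow> real^'d \<Rightarrow> real" where
  "f_loo X Y lam i x =
     (let A = Ainv X lam in
      Kvec X x \<bullet> ((A - (\<chi> a b. (A $ a $ i * A $ b $ i) / A $ i $ i)) *v Y))"

definition I_ntk :: "('n::finite \<Rightarrow> real^'d) \<Rightarrow> real^'n \<Rightarrow> real \<Rightarrow> 'n \<Rightarrow> real^'d \<Rightarrow> real \<Rightarrow> real" where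
  "I_ntk X Y lam i xte yte =
     (f_loo X Y lam i xte - yte)^2 / 2 - (f_ntk X Y lam xte - yte)^2 / 2"

definition alpha_ntk :: "('n::finite \<Rightarrow> real^'d) \<Rightarrow> real \<Rightarrow> 'n \<Rightarrow> real^'d \<Rightarrow> real" where
  "alpha_ntk X lam i xte = Kvec X xte \<bullet> (Ainv X lam *v axis i 1)"

end

theory Submission
  imports Defs
begin


definition cc :: "nat \<Rightarrow> real" where "cc n = ((1/2 + real n - 1) gchoose n)"

lemma cc_nonneg: "0 \<le> cc n"
  unfolding cc_def gbinomial_prod_rev
  by (intro divide_nonneg_pos prod_nonneg) auto

lemma cc_sums: assumes "\<bar>u\<bar> < 1" shows "(\<lambda>n. cc n * u^n) sums (1 - u) powr (-1/2)"
proof -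
  have "\<bar>-u\<bar> < 1" using assms by simp
  from gen_binomial_real[OF this, of "-(1/2)"]
  have "(\<lambda>n. ((-(1/2)) gchoose n) * (-u)^n) sums (1 + - u) powr (-(1/2))" .
  moreover have "((-(1/2)) gchoose n) * (-u)^n = cc n * u^n" for n
  proof -
    have "((-(1/2)) gchoose n) * (-u)^n = ((-1)^n * (-1)^n) * cc n * u^n"
      unfolding gbinomial_minus cc_def by (simp only: power_minus[of u] mult_ac)
    also have "(-1::real)^n * (-1)^n = 1" by (simp add: power_mult_distrib[symmetric])
    finally show ?thesis by simp
  qed
  ultimately show ?thesis by simp
qed
definition fa :: "nat \<Rightarrow> real" where "fa n = (if even n then cc (n div 2) / real (Suc n) else 0)"

lemma fa_nonneg: "0 \<le> fa n" unfolding fa_def using cc_nonneg by auto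

lemma sums_even: "(sums) f = (sums) (\<lambda> n. if even n then f (n div 2) else 0)"
    for f :: "nat \<Rightarrow> real"
  proof -
    have "f sums x = (\<lambda> n. if even n then f (n div 2) else 0) sums x" for x :: real
    proof
      assume "f sums x"
      from sums_if[OF sums_zero this] show "(\<lambda>n. if even n then f (n div 2) else 0) sums x"
        by auto
    next
      assume "(\<lambda> n. if even n then f (n div 2) else 0) sums x"
      from LIMSEQ_linear[OF this[simplified sums_def] pos2, simplified sum_split_even_odd[simplified mult.commute]]
      show "f sums x"
        unfolding sums_def by auto
    qed
    then show ?thesis ..
  qed

lemma deriv_sums: assumes "\<bar>x\<bar> < 1"
  shows "(\<lambda>n. fa n * real (Suc n) * x^n) sums inverse (sqrt (1 - x\<^sup>2))"
proof -
  have "\<bar>x\<^sup>2\<bar> < 1" using assms by (simp add: abs_square_less_1)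
  from cc_sums[OF this] have "(\<lambda>n. cc n * (x\<^sup>2)^n) sums (1 - x\<^sup>2) powr (-1/2)" .
  moreover have "(1 - x\<^sup>2) powr (-1/2) = inverse (sqrt (1 - x\<^sup>2))"
    using \<open>\<bar>x\<^sup>2\<bar> < 1\<close> by (simp add: powr_minus powr_half_sqrt)
  ultimately have "(\<lambda>n. cc n * (x\<^sup>2)^n) sums inverse (sqrt (1 - x\<^sup>2))" by simp
  then have "(\<lambda>n. if even n then cc (n div 2) * (x\<^sup>2)^(n div 2) else 0) sums inverse (sqrt (1 - x\<^sup>2))"
    using sums_even[of "\<lambda>n. cc n * (x\<^sup>2)^n"] by simp
  moreover have "(if even n then cc (n div 2) * (x\<^sup>2)^(n div 2) else 0) = fa n * real (Suc n) * x^n" for n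
    by (auto simp: fa_def power_mult[symmetric] elim!: evenE)
  ultimately show ?thesis by simp
qed

lemma arcsin_sums: assumes "\<bar>x\<bar> < 1"
  shows "(\<lambda>n. fa n * x^Suc n) sums arcsin x"
proof -
  have summ: "summable (\<lambda>n. fa n * real (Suc n) * y^n)" if "y \<in> {-1<..<1}" for y
  proof -
    have "\<bar>y\<bar> < 1" using that by auto
    from sums_summable[OF deriv_sums[OF this]] show ?thesis .
  qed
  have D: "DERIV (\<lambda>x. (\<Sum>n. fa n * x^(Suc n))) y :> inverse (sqrt (1 - y\<^sup>2))" if "y \<in> {-1<..<1}" for y
  proof -
    have y1: "\<bar>y\<bar> < 1" using that by auto
    have "(\<Sum>n. fa n * real (Suc n) * y^n) = inverse (sqrt (1 - y\<^sup>2))"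
      using sums_unique[OF deriv_sums[OF y1]] by simp
    with DERIV_power_series'[OF summ that] show ?thesis by simp
  qed
  have "\<exists>c. \<forall>y\<in>{-1<..<1}. (\<Sum>n. fa n * y^(Suc n)) - arcsin y = c"
  proof (rule has_field_derivative_zero_constant)
    fix y :: real assume y: "y \<in> {-1<..<1}"
    have "DERIV (\<lambda>y. (\<Sum>n. fa n * y^(Suc n)) - arcsin y) y :> inverse (sqrt (1 - y\<^sup>2)) - inverse (sqrt (1 - y\<^sup>2))"
      by (rule DERIV_diff[OF D[OF y] DERIV_arcsin]) (use y in auto)
    then show "((\<lambda>y. (\<Sum>n. fa n * y^(Suc n)) - arcsin y) has_field_derivative 0) (at y within {-1<..<1})"
      by (simp add: has_field_derivative_at_within)
  qed auto
  then obtain c where c: "\<And>y. y \<in> {-1<..<1} \<Longrightarrow> (\<Sum>n. fa n * y^(Suc n)) - arcsin y = c" by blast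
  have "c = 0" using c[of 0] by simp
  have eq: "(\<Sum>n. fa n * x^(Suc n)) = arcsin x" using c[of x] assms \<open>c = 0\<close> by (auto simp: abs_less_iff)
  have "summable (\<lambda>n. fa n * real (Suc n) * \<bar>x\<bar>^n)" using summ[of "\<bar>x\<bar>"] assms by auto
  then have "summable (\<lambda>n. \<bar>x\<bar> * (fa n * real (Suc n) * \<bar>x\<bar>^n))" by (rule summable_mult)
  then have "summable (\<lambda>n. fa n * x^Suc n)"
  proof (rule summable_comparison_test'[where N=0])
    fix n :: nat
    have "norm (fa n * x^Suc n) = fa n * \<bar>x\<bar>^Suc n" using fa_nonneg[of n] by (simp add: abs_mult power_abs)
    also have "\<dots> \<le> \<bar>x\<bar> * (fa n * real (Suc n) * \<bar>x\<bar>^n)"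
    proof -
      have "fa n * \<bar>x\<bar>^n * 1 \<le> fa n * \<bar>x\<bar>^n * real (Suc n)"
        using fa_nonneg[of n] by (intro mult_left_mono) auto
      then have "fa n * \<bar>x\<bar>^n \<le> fa n * real (Suc n) * \<bar>x\<bar>^n" by (simp add: mult_ac)
      then have "\<bar>x\<bar> * (fa n * \<bar>x\<bar>^n) \<le> \<bar>x\<bar> * (fa n * real (Suc n) * \<bar>x\<bar>^n)"
        by (intro mult_left_mono) auto
      then show ?thesis by (simp add: mult_ac)
    qed
    finally show "norm (fa n * x^Suc n) \<le> \<bar>x\<bar> * (fa n * real (Suc n) * \<bar>x\<bar>^n)" .
  qed
  then show ?thesis using eq summable_sums by fastforce
qed


lemma schur:
  fixes X :: "'n::finite \<Rightarrow> real^'d" and h :: "'n \<Rightarrow> 'n \<Rightarrow> real"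
  assumes "\<And>w. 0 \<le> (\<Sum>i\<in>UNIV. \<Sum>j\<in>UNIV. w i * w j * h i j)"
  shows "0 \<le> (\<Sum>i\<in>UNIV. \<Sum>j\<in>UNIV. v i * v j * ((X i \<bullet> X j) * h i j))"
proof -
  have "(\<Sum>i\<in>UNIV. \<Sum>j\<in>UNIV. v i * v j * ((X i \<bullet> X j) * h i j))
      = (\<Sum>i\<in>UNIV. \<Sum>j\<in>UNIV. \<Sum>k\<in>UNIV. (v i * X i $ k) * (v j * X j $ k) * h i j)"
    unfolding inner_vec_def sum_distrib_left sum_distrib_right
    by (intro sum.cong refl) (simp add: mult_ac)
  also have "\<dots> = (\<Sum>i\<in>UNIV. \<Sum>k\<in>UNIV. \<Sum>j\<in>UNIV. (v i * X i $ k) * (v j * X j $ k) * h i j)"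
    by (intro sum.cong refl) (rule sum.swap)
  also have "\<dots> = (\<Sum>k\<in>UNIV. \<Sum>i\<in>UNIV. \<Sum>j\<in>UNIV. (v i * X i $ k) * (v j * X j $ k) * h i j)"
    by (rule sum.swap)
  also have "\<dots> \<ge> 0"
    by (rule sum_nonneg) (rule assms)
  finally show ?thesis by simp
qed

lemma pow_psd:
  fixes X :: "'n::finite \<Rightarrow> real^'d"
  shows "0 \<le> (\<Sum>i\<in>UNIV. \<Sum>j\<in>UNIV. v i * v j * (X i \<bullet> X j)^m)"
proof (induction m arbitrary: v)
  case 0
  have "(\<Sum>i\<in>UNIV. \<Sum>j\<in>UNIV. v i * v j * (X i \<bullet> X j)^0) = (\<Sum>i\<in>UNIV. v i)^2"
    by (simp add: power2_eq_square sum_product)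
  then show ?case by simp
next
  case (Suc m)
  from schur[where h="\<lambda>i j. (X i \<bullet> X j)^m" and X=X and v=v] Suc.IH show ?case by simp
qed

lemma arcsin_psd:
  fixes X :: "'n::finite \<Rightarrow> real^'d"
  assumes r: "0 \<le> r" "r < 1" and t: "\<And>i j. \<bar>X i \<bullet> X j\<bar> \<le> 1"
  shows "0 \<le> (\<Sum>i\<in>UNIV. \<Sum>j\<in>UNIV. v i * v j * arcsin (r * (X i \<bullet> X j)))"
proof -
  have lt: "\<bar>r * (X i \<bullet> X j)\<bar> < 1" for i j
  proof -
    have "\<bar>r * (X i \<bullet> X j)\<bar> = r * \<bar>X i \<bullet> X j\<bar>" using r by (simp add: abs_mult)
    also have "\<dots> \<le> r * 1" using t[of i j] r by (intro mult_left_mono) auto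
    finally show ?thesis using r by simp
  qed
  have "(\<lambda>n. \<Sum>i\<in>UNIV. \<Sum>j\<in>UNIV. v i * v j * (fa n * (r * (X i \<bullet> X j))^Suc n))
        sums (\<Sum>i\<in>UNIV. \<Sum>j\<in>UNIV. v i * v j * arcsin (r * (X i \<bullet> X j)))"
    by (intro sums_sum sums_mult arcsin_sums lt)
  moreover have "(\<Sum>i\<in>UNIV. \<Sum>j\<in>UNIV. v i * v j * (fa n * (r * (X i \<bullet> X j))^Suc n))
     = (fa n * r^Suc n) * (\<Sum>i\<in>UNIV. \<Sum>j\<in>UNIV. v i * v j * (X i \<bullet> X j)^Suc n)" for n
    by (simp add: sum_distrib_left power_mult_distrib mult_ac)
  moreover have "0 \<le> (fa n * r^Suc n) * (\<Sum>i\<in>UNIV. \<Sum>j\<in>UNIV. v i * v j * (X i \<bullet> X j)^Suc n)" for n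
    using fa_nonneg[of n] r pow_psd[of v X "Suc n"] by (intro mult_nonneg_nonneg) auto
  ultimately have "(\<lambda>n. (fa n * r^Suc n) * (\<Sum>i\<in>UNIV. \<Sum>j\<in>UNIV. v i * v j * (X i \<bullet> X j)^Suc n))
        sums (\<Sum>i\<in>UNIV. \<Sum>j\<in>UNIV. v i * v j * arcsin (r * (X i \<bullet> X j)))"
     and nn: "\<And>n. 0 \<le> (fa n * r^Suc n) * (\<Sum>i\<in>UNIV. \<Sum>j\<in>UNIV. v i * v j * (X i \<bullet> X j)^Suc n)"
    by simp_all
  from sums_le[OF _ sums_zero this(1)] nn show ?thesis by blast
qed

lemma tarcsin_psd:
  fixes X :: "'n::finite \<Rightarrow> real^'d"
  assumes t: "\<And>i j. \<bar>X i \<bullet> X j\<bar> \<le> 1"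
  shows "0 \<le> (\<Sum>i\<in>UNIV. \<Sum>j\<in>UNIV. v i * v j * ((X i \<bullet> X j) * arcsin (X i \<bullet> X j)))"
proof -
  define r where "r k = 1 + - inverse (real (Suc k))" for k :: nat
  have r0: "0 \<le> r k" "r k < 1" for k unfolding r_def by (auto simp: field_simps)
  have rlim: "r \<longlonglongrightarrow> 1"
    unfolding r_def by (rule LIMSEQ_inverse_real_of_nat_add_minus)
  have lim1: "(\<lambda>k. arcsin (r k * (X i \<bullet> X j))) \<longlonglongrightarrow> arcsin (X i \<bullet> X j)" for i j
  proof (rule continuous_on_tendsto_compose[OF continuous_on_arcsin'])
    show "(\<lambda>k. r k * (X i \<bullet> X j)) \<longlonglongrightarrow> (X i \<bullet> X j)"
      using tendsto_mult_right[OF rlim, of "X i \<bullet> X j"] by simp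
    show "(X i \<bullet> X j) \<in> {-1..1}" using t[of i j] by auto
    have "r k * (X i \<bullet> X j) \<in> {-1..1}" for k
    proof -
      have "\<bar>r k * (X i \<bullet> X j)\<bar> = r k * \<bar>X i \<bullet> X j\<bar>" using r0[of k] by (simp add: abs_mult)
      also have "\<dots> \<le> 1 * 1" using t[of i j] r0[of k] by (intro mult_mono) auto
      finally show ?thesis by auto
    qed
    then show "\<forall>\<^sub>F k in sequentially. r k * (X i \<bullet> X j) \<in> {-1..1}" by simp
  qed
  have "(\<lambda>k. \<Sum>i\<in>UNIV. \<Sum>j\<in>UNIV. v i * v j * ((X i \<bullet> X j) * arcsin (r k * (X i \<bullet> X j))))
        \<longlonglongrightarrow> (\<Sum>i\<in>UNIV. \<Sum>j\<in>UNIV. v i * v j * ((X i \<bullet> X j) * arcsin (X i \<bullet> X j)))"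
    by (intro tendsto_sum tendsto_mult_left lim1)
  moreover have "0 \<le> (\<Sum>i\<in>UNIV. \<Sum>j\<in>UNIV. v i * v j * ((X i \<bullet> X j) * arcsin (r k * (X i \<bullet> X j))))" for k
    by (rule schur) (rule arcsin_psd[OF r0 t])
  ultimately show ?thesis using LIMSEQ_le_const by fastforce
qed



lemma ntk_split:
  assumes "\<bar>x \<bullet> y\<bar> \<le> 1"
  shows "ntk x y = (1/4) * (x \<bullet> y)^1 + (1/(2*pi)) * ((x \<bullet> y) * arcsin (x \<bullet> y))"
proof -
  have e: "arccos (x \<bullet> y) = pi/2 - arcsin (x \<bullet> y)" using assms by (intro arccos_arcsin_eq) auto
  have "ntk x y = (x \<bullet> y) * (pi - (pi/2 - arcsin (x \<bullet> y))) / (2 * pi)" unfolding ntk_def e ..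
  also have "\<dots> = (1/4) * (x \<bullet> y)^1 + (1/(2*pi)) * ((x \<bullet> y) * arcsin (x \<bullet> y))"
    by (simp add: field_simps)
  finally show ?thesis .
qed

lemma Ktr_psd:
  fixes X :: "'n::finite \<Rightarrow> real^'d"
  assumes n: "\<And>j. norm (X j) = 1"
  shows "0 \<le> v \<bullet> (Ktr X *v v)"
proof -
  have t: "\<bar>X i \<bullet> X j\<bar> \<le> 1" for i j using Cauchy_Schwarz_ineq2[of "X i" "X j"] n by simp
  have "v \<bullet> (Ktr X *v v) = (\<Sum>i\<in>UNIV. \<Sum>j\<in>UNIV. v$i * v$j * ntk (X i) (X j))"
    by (simp add: inner_vec_def matrix_vector_mult_def Ktr_def sum_distrib_left mult_ac)
  also have "\<dots> = (1/4) * (\<Sum>i\<in>UNIV. \<Sum>j\<in>UNIV. v$i * v$j * (X i \<bullet> X j)^1)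
      + (1/(2*pi)) * (\<Sum>i\<in>UNIV. \<Sum>j\<in>UNIV. v$i * v$j * ((X i \<bullet> X j) * arcsin (X i \<bullet> X j)))"
    unfolding ntk_split[OF t] by (simp add: sum_distrib_left sum.distrib algebra_simps)
  also have "\<dots> \<ge> 0"
    using pow_psd[of "\<lambda>i. v$i" X 1] tarcsin_psd[of X "\<lambda>i. v$i", OF t]
    by (intro add_nonneg_nonneg mult_nonneg_nonneg) auto
  finally show ?thesis .
qed


theorem proposition2:
  fixes X :: "'n::finite \<Rightarrow> real^'d" and Y :: "real^'n" and lam :: real
    and xte :: "real^'d" and yte :: real and i :: 'n
  assumes "\<And>j. norm (X j) = 1"
    and "lam > 0"
    and "norm xte = 1"
  shows "I_ntk X Y lam i xte yte =
           alpha_ntk X lam i xte * (f_ntk X Y lam xte - yte) * (f_loo X Y lam i (X i) - Y $ i)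
           + (1/2) * (alpha_ntk X lam i xte)^2 * (f_loo X Y lam i (X i) - Y $ i)^2"
proof -
  define M where "M = Ktr X + lam *\<^sub>R mat 1"
  have pd: "0 < v \<bullet> (M *v v)" if "v \<noteq> 0" for v
  proof -
    have "v \<bullet> (M *v v) = v \<bullet> (Ktr X *v v) + lam * (v \<bullet> v)"
      unfolding M_def by (simp add: matrix_vector_mult_add_rdistrib inner_add_right
          scaleR_matrix_vector_assoc[symmetric])
    moreover have "0 \<le> v \<bullet> (Ktr X *v v)" by (rule Ktr_psd) (rule assms(1))
    moreover have "0 < lam * (v \<bullet> v)" using that assms(2) by simp
    ultimately show ?thesis by linarith
  qed
  have "invertible M"
    unfolding invertible_left_inverse matrix_left_invertible_ker
  proof (intro allI impI)
    fix x assume "M *v x = 0"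
    then have "x \<bullet> (M *v x) = 0" by simp
    then show "x = 0" using pd[of x] by (cases "x = 0") auto
  qed
  define A where "A = Ainv X lam"
  have AM: "M ** A = mat 1 \<and> A ** M = mat 1"
    unfolding A_def Ainv_def M_def[symmetric] matrix_inv_def
    by (rule someI_ex) (use \<open>invertible M\<close> in \<open>simp add: invertible_def\<close>)
  have symM: "transpose M = M"
    unfolding M_def by (simp add: vec_eq_iff transpose_def Ktr_def ntk_def mat_def inner_commute)
  have "transpose (M ** A) = transpose (mat 1 :: real^'n^'n)" using AM by simp
  then have "transpose A ** transpose M = mat 1" by (simp only: matrix_transpose_mul transpose_mat)
  then have "transpose A ** M = mat 1" using symM by simp
  then have symA: "transpose A = A"
    by (metis AM matrix_mul_assoc matrix_mul_lid matrix_mul_rid)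
  have Asym: "A $ p $ q = A $ q $ p" for p q
    using symA by (metis transpose_def vec_lambda_beta)
  define a where "a = A *v axis i 1"
  have a_comp: "a $ p = A $ p $ i" for p
    unfolding a_def matrix_vector_mult_basis column_def by simp
  define c where "c = A $ i $ i"
  have "M *v a = axis i 1"
    unfolding a_def using AM by (simp add: matrix_vector_mul_assoc)
  then have "a \<noteq> 0" by (auto simp: axis_eq_0_iff)
  from pd[OF this] have "0 < a $ i" using \<open>M *v a = axis i 1\<close> by (simp add: inner_axis)
  then have cpos: "0 < c" unfolding c_def a_comp .
  define s where "s = a \<bullet> Y"
  have Bv: "(A - (\<chi> p q. A $ p $ i * A $ q $ i / A $ i $ i)) *v Y = A *v Y - (s / c) *\<^sub>R a"
    by (simp add: vec_eq_iff matrix_vector_mult_def s_def c_def inner_vec_def a_comp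
        sum_subtractf sum_distrib_left sum_divide_distrib algebra_simps)
  have floo: "f_loo X Y lam i x = f_ntk X Y lam x - (Kvec X x \<bullet> a) * s / c" for x
    unfolding f_loo_def Let_def A_def[symmetric] Bv f_ntk_def
    by (simp add: inner_diff_right)
  have alpha: "alpha_ntk X lam i xte = Kvec X xte \<bullet> a"
    unfolding alpha_ntk_def A_def[symmetric] a_def ..
  have Kvi: "Kvec X (X i) \<bullet> w = (Ktr X *v w) $ i" for w
    by (simp add: inner_vec_def matrix_vector_mult_def Kvec_def Ktr_def ntk_def inner_commute)
  have KA: "Ktr X *v (A *v w) = w - lam *\<^sub>R (A *v w)" for w
  proof -
    have "Ktr X = M - lam *\<^sub>R mat 1" unfolding M_def by simp
    then have "Ktr X *v (A *v w) = M *v (A *v w) - (lam *\<^sub>R mat 1) *v (A *v w)"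
      by (simp add: matrix_vector_mult_diff_rdistrib)
    also have "\<dots> = w - lam *\<^sub>R (A *v w)"
    proof -
      have l: "(lam *\<^sub>R mat 1) *v y = lam *\<^sub>R y" for y :: "real^'n"
        by (metis scaleR_matrix_vector_assoc matrix_vector_mul_lid)
      have m: "M *v (A *v w) = w" using AM by (simp add: matrix_vector_mul_assoc)
      show ?thesis by (simp only: l m)
    qed
    finally show ?thesis .
  qed
  have AYi: "(A *v Y) $ i = s"
    by (simp add: matrix_vector_mult_def s_def inner_vec_def a_comp Asym mult_ac)
  have fXi: "f_ntk X Y lam (X i) = Y $ i - lam * s"
    unfolding f_ntk_def A_def[symmetric] Kvi KA using AYi by simp
  have kXi: "Kvec X (X i) \<bullet> a = 1 - lam * c"
    unfolding a_def Kvi KA by (simp add: a_def[symmetric] a_comp c_def)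
  have loo_i: "f_loo X Y lam i (X i) - Y $ i = - (s / c)"
    unfolding floo fXi kXi using cpos by (simp add: field_simps)
  have gen: "((f - k * q) - y)^2/2 - (f-y)^2/2 = k*(f-y)*(-q) + 1/2*k^2*(-q)^2" for f k q y :: real
    by (simp add: power2_eq_square field_simps)
  have fl: "f_loo X Y lam i xte = f_ntk X Y lam xte - (Kvec X xte \<bullet> a) * (s / c)"
    unfolding floo by simp
  show ?thesis
    unfolding I_ntk_def loo_i fl alpha by (rule gen)
qed

end
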